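(* Let $d\ge 2$ and $E,F\subset\mathbb F_q^d$. Then $$\sum_{t\in\mathbb F_q}\nu^2(t)\leq \frac{|E|^2|F|^2}{q}+q^{3d}\sum_{r\in\mathbb F_q}\Big|\sum_{m\in S_r}\overline{\widehat E(m)}\widehat F(m)\Big|^2.$$
   Context: $\mathbb F_q$ is a finite field of characteristic greater than two, and $\chi$ is a fixed nontrivial additive character of $\mathbb F_q$. For $f:\mathbb F_q^d\to\mathbb C$, $\widehat f(m)=q^{-d}\sum_{x\in\mathbb F_q^d}\chi(-m\cdot x)f(x)$; sets are identified with their indicator functions. For $m\in\mathbb F_q^d$, $\|m\|=m_1^2+\dots+m_d^2$; $S_r=\{x\in\mathbb F_q^d:\|x\|=r\}$. $\nu(t)=|\{(x,y)\in E\times F:\|x-y\|=t\}|$. *)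

theory Defs
  imports "HOL-Analysis.Analysis"
begin

text \<open>Finite field F_q is modelled as a type 'a of class {finite, field};
  q = CARD('a). Vectors in F_q^d are 'a^'n with d = CARD('n).\<close>

definition additive_character :: "('a::{finite,field} \<Rightarrow> complex) \<Rightarrow> bool" where
  "additive_character chr \<longleftrightarrow>
     (\<forall>x y. chr (x + y) = chr x * chr y) \<and> (\<forall>x. cmod (chr x) = 1)"

definition nontrivial_character :: "('a::{finite,field} \<Rightarrow> complex) \<Rightarrow> bool" where
  "nontrivial_character chr \<longleftrightarrow> (\<exists>x. chr x \<noteq> 1)"

definition dotp :: "'a::{finite,field}^'n \<Rightarrow> 'a^'n \<Rightarrow> 'a" where
  "dotp m x = (\<Sum>i\<in>UNIV. m $ i * x $ i)"

definition qnorm :: "'a::{finite,field}^'n \<Rightarrow> 'a" where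
  "qnorm m = (\<Sum>i\<in>UNIV. (m $ i)^2)"

definition sphere_q :: "'a::{finite,field} \<Rightarrow> ('a^'n) set" where
  "sphere_q r = {x. qnorm x = r}"

definition indic :: "('a::{finite,field}^'n) set \<Rightarrow> 'a^'n \<Rightarrow> complex" where
  "indic E x = (if x \<in> E then 1 else 0)"

definition fhat :: "('a::{finite,field} \<Rightarrow> complex) \<Rightarrow> ('a^'n \<Rightarrow> complex) \<Rightarrow> 'a^'n \<Rightarrow> complex" where
  "fhat chr f m = (1 / of_nat (CARD('a) ^ CARD('n))) * (\<Sum>x\<in>UNIV. chr (- dotp m x) * f x)"

definition dist_count :: "('a::{finite,field}^'n) set \<Rightarrow> ('a^'n) set \<Rightarrow> 'a \<Rightarrow> nat" where
  "dist_count E F t = card {(x, y). x \<in> E \<and> y \<in> F \<and> qnorm (x - y) = t}"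

end

theory Submission
  imports Defs
begin


locale fchar =
  fixes chr :: "'a::{finite,field} \<Rightarrow> complex"
  assumes add: "\<And>x y. chr (x + y) = chr x * chr y"
    and nrm: "\<And>x. cmod (chr x) = 1"
    and nontriv: "\<exists>x. chr x \<noteq> 1"
    and two: "(2::'a) \<noteq> 0"
begin

lemma chr0: "chr 0 = 1"
proof -
  have "chr 0 = chr 0 * chr 0" using add[of 0 0] by simp
  moreover have "chr 0 \<noteq> 0" using nrm[of 0] by auto
  ultimately show ?thesis by (metis mult_cancel_left2)
qed

lemma chr_neg: "chr (- a) = cnj (chr a)"
proof -
  have "chr a * chr (-a) = 1" using add[of a "-a"] chr0 by simp
  moreover have "chr a * cnj (chr a) = 1"
    using complex_norm_square[of "chr a"] nrm[of a] by simp
  moreover have "chr a \<noteq> 0" using nrm[of a] by auto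
  ultimately show ?thesis by (metis mult_left_cancel)
qed

lemma chr_diff: "chr (a - b) = chr a * cnj (chr b)"
  using add[of a "-b"] chr_neg[of b] by simp

lemma L1: "(\<Sum>t\<in>UNIV. chr (a * t)) = (if a = 0 then of_nat CARD('a) else 0)"
proof (cases "a = 0")
  case True then show ?thesis by (simp add: chr0)
next
  case False
  obtain b where b: "chr b \<noteq> 1" using nontriv by blast
  let ?S = "\<Sum>t\<in>UNIV. chr (a * t)"
  have "?S = (\<Sum>t\<in>UNIV. chr (a * (t + b / a)))"
    by (rule sum.reindex_bij_witness[of _ "\<lambda>t. t + b / a" "\<lambda>t. t - b / a"]) auto
  also have "\<dots> = (\<Sum>t\<in>UNIV. chr b * chr (a * t))"
    using False by (intro sum.cong refl) (simp add: distrib_left add mult.commute)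
  also have "\<dots> = chr b * ?S" by (simp add: sum_distrib_left)
  finally have "(1 - chr b) * ?S = 0" by (simp add: algebra_simps)
  then show ?thesis using False b by simp
qed

lemma parseval:
  fixes c :: "'a \<Rightarrow> complex"
  shows "(\<Sum>t\<in>UNIV. (cmod (\<Sum>s\<in>UNIV. chr (s * t) * c s))^2)
        = real CARD('a) * (\<Sum>s\<in>UNIV. (cmod (c s))^2)"
proof -
  have "complex_of_real (\<Sum>t\<in>UNIV. (cmod (\<Sum>s\<in>UNIV. chr (s * t) * c s))^2)
     = (\<Sum>t\<in>UNIV. (\<Sum>s\<in>UNIV. chr (s * t) * c s) * cnj (\<Sum>s\<in>UNIV. chr (s * t) * c s))"
    by (simp only: of_real_sum complex_norm_square)
  also have "\<dots> = (\<Sum>t\<in>UNIV. \<Sum>s'\<in>UNIV. \<Sum>s\<in>UNIV. c s * cnj (c s') * chr ((s - s') * t))"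
    by (simp add: sum_distrib_left sum_distrib_right chr_diff left_diff_distrib algebra_simps)
  also have "\<dots> = (\<Sum>s\<in>UNIV. \<Sum>s'\<in>UNIV. c s * cnj (c s') * (\<Sum>t\<in>UNIV. chr ((s - s') * t)))"
  proof -
    let ?f = "\<lambda>s s' t. c s * cnj (c s') * chr ((s - s') * t)"
    have "(\<Sum>t\<in>UNIV. \<Sum>s'\<in>UNIV. \<Sum>s\<in>UNIV. ?f s s' t) = (\<Sum>s'\<in>UNIV. \<Sum>t\<in>UNIV. \<Sum>s\<in>UNIV. ?f s s' t)"
      by (rule sum.swap)
    also have "\<dots> = (\<Sum>s'\<in>UNIV. \<Sum>s\<in>UNIV. \<Sum>t\<in>UNIV. ?f s s' t)"
      by (rule sum.cong[OF refl], rule sum.swap)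
    also have "\<dots> = (\<Sum>s\<in>UNIV. \<Sum>s'\<in>UNIV. \<Sum>t\<in>UNIV. ?f s s' t)"
      by (rule sum.swap)
    finally show ?thesis by (simp add: sum_distrib_left)
  qed
  also have "\<dots> = (\<Sum>s\<in>UNIV. c s * cnj (c s) * of_nat CARD('a))"
    by (simp add: L1 if_distrib cong: if_cong)
  also have "\<dots> = complex_of_real (real CARD('a) * (\<Sum>s\<in>UNIV. (cmod (c s))^2))"
    by (simp only: of_real_mult of_real_sum of_real_of_nat_eq complex_norm_square sum_distrib_left) (simp add: mult.commute)
  finally show ?thesis using of_real_eq_iff by blast
qed

lemma dotp_add_right: "dotp w (v + v0) = dotp w v + dotp w v0"
  by (simp add: dotp_def distrib_left sum.distrib)

lemma dotp_axis: "dotp w (axis i c) = w $ i * c"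
proof -
  have "dotp w (axis i c) = (\<Sum>j\<in>UNIV. if j = i then w $ i * c else 0)"
    unfolding dotp_def axis_def by (intro sum.cong refl) auto
  then show ?thesis by simp
qed

lemma L2: "(\<Sum>v\<in>UNIV. chr (dotp w (v::'a^'n))) = (if w = 0 then of_nat (CARD('a) ^ CARD('n)) else 0)"
proof (cases "w = 0")
  case True then show ?thesis by (simp add: dotp_def chr0)
next
  case False
  then obtain i where i: "w $ i \<noteq> 0" by (metis vec_eq_iff zero_index)
  obtain b where b: "chr b \<noteq> 1" using nontriv by blast
  define v0 where "v0 = axis i (b / w $ i)"
  have d0: "dotp w v0 = b" using i by (simp add: v0_def dotp_axis)
  let ?S = "\<Sum>v\<in>UNIV. chr (dotp w (v::'a^'n))"
  have "?S = (\<Sum>v\<in>UNIV. chr (dotp w (v + v0)))"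
    by (rule sum.reindex_bij_witness[of _ "\<lambda>t. t + v0" "\<lambda>t. t - v0"]) auto
  also have "\<dots> = (\<Sum>v\<in>UNIV. chr b * chr (dotp w v))"
    by (intro sum.cong refl) (simp add: dotp_add_right d0 add mult.commute)
  also have "\<dots> = chr b * ?S" by (simp add: sum_distrib_left)
  finally have "(1 - chr b) * ?S = 0" by (simp add: algebra_simps)
  then show ?thesis using False b by simp
qed

definition G :: "'a \<Rightarrow> 'n::finite itself \<Rightarrow> complex" where
  "G c _ = (\<Sum>x\<in>(UNIV::('a^'n) set). chr (c * qnorm x))"

lemma qnorm_diff: "qnorm x - qnorm y = dotp (x - y) (x + (y::'a^'n))"
  by (simp add: qnorm_def dotp_def sum_subtractf[symmetric] power2_eq_square algebra_simps)

lemma gauss: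
  assumes c: "c \<noteq> 0"
  shows "(cmod (G c TYPE('n::finite)))^2 = real (CARD('a) ^ CARD('n))"
proof -
  let ?F = "\<lambda>p::('a^'n) \<times> ('a^'n). chr (c * dotp (fst p) (snd p))"
  let ?h = "\<lambda>p::('a^'n) \<times> ('a^'n). (fst p - snd p, fst p + snd p)"
  have injh: "inj ?h"
  proof (rule injI)
    fix p p' assume "?h p = ?h p'"
    then have e1: "fst p - snd p = fst p' - snd p'" and e2: "fst p + snd p = fst p' + snd p'" by auto
    have "fst p = fst p'"
    proof (subst vec_eq_iff, intro allI)
      fix i
      have a1: "(fst p - snd p) $ i = (fst p' - snd p') $ i" using e1 by simp
      have a2: "(fst p + snd p) $ i = (fst p' + snd p') $ i" using e2 by simp
      have "(fst p - snd p) $ i + (fst p + snd p) $ i = (fst p' - snd p') $ i + (fst p' + snd p') $ i"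
        using a1 a2 by simp
      then have "fst p $ i + fst p $ i = fst p' $ i + fst p' $ i" by (simp add: algebra_simps)
      then have "2 * fst p $ i = 2 * fst p' $ i" by (simp only: mult_2)
      then show "fst p $ i = fst p' $ i" using two by simp
    qed
    moreover have "snd p = snd p'" using e1 calculation by simp
    ultimately show "p = p'" by (simp add: prod_eq_iff)
  qed
  have surjh: "range ?h = UNIV" using finite_UNIV_inj_surj[of ?h] injh by simp
  have "complex_of_real ((cmod (G c TYPE('n)))^2) = G c TYPE('n) * cnj (G c TYPE('n))"
    by (simp only: complex_norm_square)
  also have "\<dots> = (\<Sum>x\<in>(UNIV::('a^'n) set). \<Sum>y\<in>(UNIV::('a^'n) set). chr (c * qnorm x - c * qnorm y))"
    by (simp add: G_def cnj_sum sum_distrib_left sum_distrib_right chr_diff) (rule sum.swap)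
  also have "\<dots> = (\<Sum>(x,y)\<in>UNIV \<times> UNIV. chr (c * qnorm (x::'a^'n) - c * qnorm (y::'a^'n)))"
    by (rule sum.cartesian_product)
  also have "\<dots> = (\<Sum>p\<in>UNIV. ?F (?h p))"
    unfolding UNIV_Times_UNIV
    by (rule sum.cong[OF refl]) (auto simp: right_diff_distrib[symmetric] qnorm_diff)
  also have "\<dots> = (\<Sum>p\<in>UNIV. ?F p)"
    using sum.reindex[OF injh, of ?F] surjh by simp
  also have "\<dots> = (\<Sum>(u,v)\<in>UNIV \<times> UNIV. chr (dotp (\<chi> i. c * u $ i) (v::'a^'n)))"
    unfolding UNIV_Times_UNIV
    by (rule sum.cong[OF refl]) (auto simp: dotp_def sum_distrib_left mult.assoc)
  also have "\<dots> = (\<Sum>u\<in>UNIV. \<Sum>v\<in>(UNIV::('a^'n) set). chr (dotp (\<chi> i. c * u $ i) v))"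
    by (rule sum.cartesian_product[symmetric])
  also have "\<dots> = (\<Sum>u\<in>(UNIV::('a^'n) set). if u = 0 then of_nat (CARD('a) ^ CARD('n)) else 0)"
  proof (rule sum.cong[OF refl])
    fix u :: "'a^'n"
    have "((\<chi> i. c * u $ i) = 0) = (u = 0)" using c by (simp add: vec_eq_iff)
    then show "(\<Sum>v\<in>UNIV. chr (dotp (\<chi> i. c * u $ i) v)) = (if u = 0 then of_nat (CARD('a) ^ CARD('n)) else 0)"
      by (simp only: L2)
  qed
  also have "\<dots> = of_nat (CARD('a) ^ CARD('n))" by simp
  finally show ?thesis by (metis of_real_eq_iff of_real_of_nat_eq)
qed

lemma complete_square:
  assumes u: "u \<noteq> 0"
  shows "(\<Sum>m\<in>UNIV. chr (u * qnorm m + dotp m (z::'a^'n))) = G u TYPE('n) * chr ((- 1 / (4 * u)) * qnorm z)"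
proof -
  define k :: "'a^'n" where "k = (\<chi> i. - (z $ i) / (2 * u))"
  have "(\<Sum>m\<in>UNIV. chr (u * qnorm m + dotp m z)) = (\<Sum>w\<in>UNIV. chr (u * qnorm (w + k) + dotp (w + k) z))"
    by (rule sum.reindex_bij_witness[of _ "\<lambda>t. t + k" "\<lambda>t. t - k"]) auto
  also have "\<dots> = (\<Sum>w\<in>(UNIV::('a^'n) set). chr (u * qnorm w) * chr ((- 1 / (4 * u)) * qnorm z))"
  proof (rule sum.cong[OF refl])
    fix w :: "'a^'n"
    have 4: "(4::'a) \<noteq> 0" using two by (metis mult_2 mult_eq_0_iff numeral_Bit0 one_add_one)
    have "u * qnorm (w + k) + dotp (w + k) z = u * qnorm w + (- 1 / (4 * u)) * qnorm z"
      unfolding qnorm_def dotp_def sum_distrib_left sum.distrib[symmetric]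
    proof (intro sum.cong refl)
      fix i
      show "u * ((w + k) $ i)\<^sup>2 + (w + k) $ i * z $ i = u * (w $ i)\<^sup>2 + - 1 / (4 * u) * (z $ i)\<^sup>2"
      proof -
        define v where "v = 1 / (2 * u)"
        have uv: "2 * u * v = 1" using u two by (simp add: v_def)
        have kk: "(w + k) $ i = w $ i - z $ i * v" by (simp add: k_def v_def)
        have q: "- 1 / (4 * u) = - (u * v * v)" using u two 4 by (simp add: v_def field_simps)
        have "u * (w $ i - z $ i * v)\<^sup>2 + (w $ i - z $ i * v) * z $ i = u * (w $ i)\<^sup>2 + - (u * v * v) * (z $ i)\<^sup>2"
          using uv by algebra
        then show ?thesis by (simp only: kk q)
      qed
    qed
    then show "chr (u * qnorm (w + k) + dotp (w + k) z) = chr (u * qnorm w) * chr ((- 1 / (4 * u)) * qnorm z)"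
      by (simp only: add[symmetric])
  qed
  also have "\<dots> = G u TYPE('n) * chr ((- 1 / (4 * u)) * qnorm z)"
    by (simp add: G_def sum_distrib_right)
  finally show ?thesis .
qed

end

context fchar begin

definition PP :: "('a^'n::finite \<Rightarrow> complex) \<Rightarrow> ('a^'n \<Rightarrow> complex) \<Rightarrow> 'a \<Rightarrow> complex" where
  "PP f g s = (\<Sum>x\<in>UNIV. \<Sum>y\<in>UNIV. cnj (f x) * g y * chr (s * qnorm (x - y)))"

definition AA :: "('a^'n::finite \<Rightarrow> complex) \<Rightarrow> ('a^'n \<Rightarrow> complex) \<Rightarrow> 'a \<Rightarrow> complex" where
  "AA f g r = (\<Sum>m\<in>sphere_q r. cnj (fhat chr f m) * fhat chr g m)"

lemma dotp_diff_right: "dotp m (x - y) = dotp m x - dotp m y"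
  by (simp add: dotp_def right_diff_distrib sum_subtractf)

lemma prod_hat:
  fixes f g :: "'a^'n::finite \<Rightarrow> complex"
  shows "cnj (fhat chr f m) * fhat chr g m
   = (1 / of_nat (CARD('a) ^ CARD('n)))^2 * (\<Sum>x\<in>UNIV. \<Sum>y\<in>UNIV. cnj (f x) * g y * chr (dotp m (x - y)))"
proof -
  have c: "cnj (fhat chr f m) = (1 / of_nat (CARD('a) ^ CARD('n))) * (\<Sum>x\<in>UNIV. chr (dotp m x) * cnj (f x))"
    by (simp add: fhat_def cnj_sum chr_neg[symmetric])
  show ?thesis
    unfolding c fhat_def
    by (simp add: sum_distrib_left sum_distrib_right dotp_diff_right chr_diff chr_neg power2_eq_square mult_ac)
qed

lemma bhat:
  fixes f g :: "'a^'n::finite \<Rightarrow> complex"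
  assumes u: "u \<noteq> 0"
  shows "(\<Sum>r\<in>UNIV. chr (r * u) * AA f g r)
     = G u TYPE('n) * (1 / of_nat (CARD('a) ^ CARD('n)))^2 * PP f g (- 1 / (4 * u))"
proof -
  let ?N = "(1 / of_nat (CARD('a) ^ CARD('n)) :: complex)^2"
  have "(\<Sum>r\<in>UNIV. chr (r * u) * AA f g r)
     = (\<Sum>r\<in>UNIV. \<Sum>m\<in>{m. m \<in> UNIV \<and> qnorm m = r}. chr (u * qnorm m) * (cnj (fhat chr f m) * fhat chr g m))"
    by (simp add: AA_def sphere_q_def sum_distrib_left mult.commute)
  also have "\<dots> = (\<Sum>m\<in>UNIV. chr (u * qnorm m) * (cnj (fhat chr f m) * fhat chr g m))"
    by (rule sum.group) auto
  also have "\<dots> = ?N * (\<Sum>m\<in>UNIV. \<Sum>x\<in>UNIV. \<Sum>y\<in>UNIV. cnj (f x) * g y * chr (u * qnorm m + dotp m (x - y)))"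
    by (simp only: prod_hat) (simp add: sum_distrib_left add mult_ac)
  also have "\<dots> = ?N * (\<Sum>x\<in>UNIV. \<Sum>y\<in>UNIV. \<Sum>m\<in>UNIV. cnj (f x) * g y * chr (u * qnorm m + dotp m (x - y)))"
  proof -
    let ?k = "\<lambda>m x y. cnj (f x) * g y * chr (u * qnorm m + dotp m (x - y))"
    have "(\<Sum>m\<in>UNIV. \<Sum>x\<in>UNIV. \<Sum>y\<in>UNIV. ?k m x y) = (\<Sum>x\<in>UNIV. \<Sum>m\<in>UNIV. \<Sum>y\<in>UNIV. ?k m x y)"
      by (rule sum.swap)
    also have "\<dots> = (\<Sum>x\<in>UNIV. \<Sum>y\<in>UNIV. \<Sum>m\<in>UNIV. ?k m x y)"
      by (rule sum.cong[OF refl], rule sum.swap)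
    finally show ?thesis by simp
  qed
  also have "\<dots> = ?N * (\<Sum>x\<in>UNIV. \<Sum>y\<in>UNIV. cnj (f x) * g y * (G u TYPE('n) * chr ((- 1 / (4 * u)) * qnorm (x - y))))"
    by (simp add: sum_distrib_left[symmetric] complete_square[OF u])
  also have "\<dots> = G u TYPE('n) * ?N * PP f g (- 1 / (4 * u))"
    by (simp add: PP_def sum_distrib_left mult_ac)
  finally show ?thesis .
qed

end

context fchar begin

lemma count_sum:
  fixes E F :: "('a^'n::finite) set"
  shows "(of_nat (dist_count E F t) :: complex)
    = (\<Sum>x\<in>UNIV. \<Sum>y\<in>UNIV. indic E x * indic F y * (if qnorm (x - y) = t then 1 else 0))"
proof -
  let ?S = "{(x, y). x \<in> E \<and> y \<in> F \<and> qnorm (x - y) = t}"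
  have "(of_nat (card ?S) :: complex) = (\<Sum>p\<in>UNIV \<inter> ?S. 1)" by simp
  also have "\<dots> = (\<Sum>p\<in>UNIV. if p \<in> ?S then 1 else 0)"
    by (rule sum.inter_restrict) simp
  also have "\<dots> = (\<Sum>(x,y)\<in>UNIV \<times> UNIV. if (x, y) \<in> ?S then 1 else 0)"
    by (simp only: UNIV_Times_UNIV) (rule sum.cong[OF refl], simp only: split_beta prod.collapse)
  also have "\<dots> = (\<Sum>x\<in>UNIV. \<Sum>y\<in>UNIV. if (x, y) \<in> ?S then 1 else 0)"
    by (rule sum.cartesian_product[symmetric])
  also have "\<dots> = (\<Sum>x\<in>UNIV. \<Sum>y\<in>UNIV. indic E x * indic F y * (if qnorm (x - y) = t then 1 else 0))"
    by (intro sum.cong refl) (simp add: indic_def)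
  finally show ?thesis by (simp add: dist_count_def)
qed

lemma delta_chr: "(if a = t then 1 else 0 :: complex) = (1 / of_nat CARD('a)) * (\<Sum>s\<in>UNIV. chr (s * a) * chr (s * (- t)))"
proof -
  have "(\<Sum>s\<in>UNIV. chr (s * a) * chr (s * (- t))) = (\<Sum>s\<in>UNIV. chr ((a - t) * s))"
    by (intro sum.cong refl) (simp add: add[symmetric] algebra_simps)
  also have "\<dots> = (if a = t then of_nat CARD('a) else 0)" by (simp add: L1)
  finally show ?thesis by simp
qed

lemma nu_formula:
  fixes E F :: "('a^'n::finite) set"
  shows "(of_nat (dist_count E F t) :: complex)
    = (1 / of_nat CARD('a)) * (\<Sum>s\<in>UNIV. chr (s * (- t)) * PP (indic E) (indic F) s)"
proof -
  have ci: "cnj (indic E x) = indic E x" for x by (simp add: indic_def)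
  let ?k = "\<lambda>x y s. indic E x * indic F y * (chr (s * qnorm (x - y)) * chr (s * (- t)))"
  have "(of_nat (dist_count E F t) :: complex)
     = (1 / of_nat CARD('a)) * (\<Sum>x\<in>UNIV. \<Sum>y\<in>UNIV. \<Sum>s\<in>UNIV. ?k x y s)"
    by (simp only: count_sum delta_chr) (simp add: sum_distrib_left mult_ac)
  also have "(\<Sum>x\<in>UNIV. \<Sum>y\<in>UNIV. \<Sum>s\<in>UNIV. ?k x y s) = (\<Sum>x\<in>UNIV. \<Sum>s\<in>UNIV. \<Sum>y\<in>UNIV. ?k x y s)"
    by (rule sum.cong[OF refl], rule sum.swap)
  also have "\<dots> = (\<Sum>s\<in>UNIV. \<Sum>x\<in>UNIV. \<Sum>y\<in>UNIV. ?k x y s)"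
    by (rule sum.swap)
  also have "\<dots> = (\<Sum>s\<in>UNIV. chr (s * (- t)) * PP (indic E) (indic F) s)"
    by (simp add: PP_def ci sum_distrib_left mult_ac)
  finally show ?thesis .
qed

end

context fchar begin

lemma sum_indic: "(\<Sum>x\<in>UNIV. indic E x) = of_nat (card (E :: ('a^'n::finite) set))"
proof -
  have h: "(\<Sum>x\<in>UNIV. if x \<in> E then 1 else 0 :: complex) = (\<Sum>x\<in>E. 1)"
    using sum.inter_restrict[of "UNIV::('a^'n) set" "\<lambda>x. 1::complex" E] by simp
  show ?thesis by (simp add: indic_def h)
qed

lemma P0: "PP (indic E) (indic F) 0 = of_nat (card (E :: ('a^'n::finite) set) * card F)"
proof -
  have ci: "cnj (indic E x) = indic E x" for x by (simp add: indic_def)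
  have "PP (indic E) (indic F) 0 = (\<Sum>x\<in>UNIV. indic E x) * (\<Sum>y\<in>UNIV. indic F y)"
    by (simp add: PP_def ci chr0 sum_product)
  then show ?thesis by (simp add: sum_indic)
qed

lemma sum_neg_reindex: "(\<Sum>t\<in>UNIV. h (- t)) = (\<Sum>t\<in>(UNIV::'a set). h t)"
  by (rule sum.reindex_bij_witness[of _ uminus uminus]) auto

lemma main_loc:
  fixes E F :: "('a^'n::finite) set"
  shows "(\<Sum>t\<in>UNIV. (real (dist_count E F t))^2)
     \<le> (real (card E))^2 * (real (card F))^2 / real CARD('a)
       + real CARD('a) ^ (3 * CARD('n)) *
         (\<Sum>r\<in>UNIV. (cmod (\<Sum>m\<in>sphere_q r. cnj (fhat chr (indic E) m) * fhat chr (indic F) m))^2)"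
proof -
  let ?P = "PP (indic E) (indic F)"
  define q where "q = real CARD('a)"
  define N where "N = real (CARD('a) ^ CARD('n))"
  have qpos: "q > 0" by (simp add: q_def)
  have Npos: "N > 0" by (simp add: N_def)
  define Bh where "Bh u = (\<Sum>r\<in>UNIV. chr (r * u) * AA (indic E) (indic F) r)" for u
  define phi where "phi u = - 1 / (4 * u)" for u :: 'a
  have 4: "(4::'a) \<noteq> 0" using two by (metis mult_2 mult_eq_0_iff numeral_Bit0 one_add_one)
  have s1: "(\<Sum>t\<in>UNIV. (real (dist_count E F t))^2) = (1 / q) * (\<Sum>s\<in>UNIV. (cmod (?P s))^2)"
  proof -
    have "(\<Sum>t\<in>UNIV. (real (dist_count E F t))^2)
        = (\<Sum>t\<in>UNIV. (cmod (of_nat (dist_count E F t) :: complex))^2)"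
      by (simp only: norm_of_nat)
    also have "\<dots> = (\<Sum>t\<in>UNIV. (1 / q)^2 * (cmod (\<Sum>s\<in>UNIV. chr (s * (- t)) * ?P s))^2)"
      by (simp only: nu_formula norm_mult power_mult_distrib) (simp add: q_def norm_divide)
    also have "\<dots> = (1 / q)^2 * (\<Sum>t\<in>UNIV. (cmod (\<Sum>s\<in>UNIV. chr (s * t) * ?P s))^2)"
      by (simp only: sum_distrib_left[symmetric] sum_neg_reindex[where h = "\<lambda>t. (cmod (\<Sum>s\<in>UNIV. chr (s * t) * ?P s))^2"])
    also have "\<dots> = (1 / q) * (\<Sum>s\<in>UNIV. (cmod (?P s))^2)"
      using qpos by (simp only: parseval q_def[symmetric]) (simp add: power2_eq_square)
    finally show ?thesis .
  qed
  have s4: "(cmod (?P (phi u)))^2 = N ^ 3 * (cmod (Bh u))^2" if u: "u \<noteq> 0" for u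
  proof -
    have "Bh u = G u TYPE('n) * (1 / of_nat (CARD('a) ^ CARD('n)))^2 * ?P (phi u)"
      unfolding Bh_def phi_def by (rule bhat[OF u])
    then have "(cmod (Bh u))^2 = (cmod (G u TYPE('n)))^2 * ((1 / N)^2)^2 * (cmod (?P (phi u)))^2"
      by (simp add: norm_mult power_mult_distrib norm_divide N_def norm_power)
    also have "\<dots> = N * ((1 / N)^2)^2 * (cmod (?P (phi u)))^2"
      using gauss[OF u, where 'n = 'n] by (simp add: N_def)
    finally have "(cmod (Bh u))^2 = N * ((1 / N)^2)^2 * (cmod (?P (phi u)))^2" .
    then show ?thesis using Npos by (simp add: field_simps power2_eq_square power3_eq_cube)
  qed
  have s3: "(\<Sum>s\<in>UNIV - {0}. (cmod (?P s))^2) = (\<Sum>u\<in>UNIV - {0}. (cmod (?P (phi u)))^2)"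
  proof -
    have pp: "phi (phi u) = u" if u: "u \<noteq> 0" for u using u 4 by (simp add: phi_def field_simps)
    have pn: "phi u \<noteq> 0" if u: "u \<noteq> 0" for u using u 4 by (simp add: phi_def)
    show ?thesis
      by (rule sum.reindex_bij_witness[of _ phi phi]) (auto simp: pp pn)
  qed
  have s5: "(\<Sum>u\<in>UNIV - {0}. (cmod (?P (phi u)))^2) \<le> N ^ 3 * (q * (\<Sum>r\<in>UNIV. (cmod (AA (indic E) (indic F) r))^2))"
  proof -
    have "(\<Sum>u\<in>UNIV - {0}. (cmod (?P (phi u)))^2) = (\<Sum>u\<in>UNIV - {0}. N ^ 3 * (cmod (Bh u))^2)"
      by (intro sum.cong refl) (simp add: s4)
    also have "\<dots> \<le> (\<Sum>u\<in>UNIV. N ^ 3 * (cmod (Bh u))^2)"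
      using Npos by (intro sum_mono2) auto
    also have "\<dots> = N ^ 3 * (\<Sum>u\<in>UNIV. (cmod (Bh u))^2)" by (simp add: sum_distrib_left)
    also have "(\<Sum>u\<in>UNIV. (cmod (Bh u))^2) = q * (\<Sum>r\<in>UNIV. (cmod (AA (indic E) (indic F) r))^2)"
      unfolding Bh_def q_def by (rule parseval)
    finally show ?thesis .
  qed
  have s2: "(\<Sum>s\<in>UNIV. (cmod (?P s))^2) = (real (card E))^2 * (real (card F))^2 + (\<Sum>s\<in>UNIV - {0}. (cmod (?P s))^2)"
    by (simp add: sum.remove[of UNIV 0] P0 norm_mult del: of_nat_mult) (simp add: power_mult_distrib)
  have "(\<Sum>t\<in>UNIV. (real (dist_count E F t))^2)
      \<le> (1 / q) * ((real (card E))^2 * (real (card F))^2 + N ^ 3 * (q * (\<Sum>r\<in>UNIV. (cmod (AA (indic E) (indic F) r))^2)))"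
    unfolding s1 s2 s3 using s5 qpos by (simp add: divide_right_mono)
  also have "\<dots> = (real (card E))^2 * (real (card F))^2 / q + N ^ 3 * (\<Sum>r\<in>UNIV. (cmod (AA (indic E) (indic F) r))^2)"
    using qpos by (simp add: field_simps)
  finally show ?thesis
    by (simp add: q_def N_def AA_def power_mult[symmetric] mult.commute)
qed

end

theorem mainTheorem8:
  fixes chr :: "'a::{finite,field} \<Rightarrow> complex"
    and E F :: "('a^'n) set"
  assumes "CHAR('a) > 2"
    and "additive_character chr"
    and "nontrivial_character chr"
    and "CARD('n) \<ge> 2"
  shows "(\<Sum>t\<in>UNIV. (real (dist_count E F t))^2)
     \<le> (real (card E))^2 * (real (card F))^2 / real CARD('a)
       + real CARD('a) ^ (3 * CARD('n)) *
         (\<Sum>r\<in>UNIV. (cmod (\<Sum>m\<in>sphere_q r. cnj (fhat chr (indic E) m) * fhat chr (indic F) m))^2)"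
proof -
  have two: "(2::'a) \<noteq> 0"
  proof
    assume "(2::'a) = 0"
    then have "CHAR('a) dvd 2" using of_nat_eq_0_iff_char_dvd[of 2, where 'a='a] by simp
    then show False using assms(1) by (auto dest: dvd_imp_le)
  qed
  interpret fchar chr
    using assms(2,3) two unfolding additive_character_def nontrivial_character_def
    by unfold_locales auto
  show ?thesis by (rule main_loc)
qed

end
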